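(* If $M$ is a monoidal category which admits functorial inverses, then the underlying category of $M$ is a groupoid.
   Context: A monoidal category $M$ admits functorial inverses if there exist a functor $i:M\to M$ and a natural isomorphism $x\otimes i(x)\cong 1$. *)

theory Defs
  imports Main
begin

text \<open>A category whose objects are all elements of type 'o and whose morphisms are
  all elements of type 'm.  cmp g f is the composite g after f (defined when cod f = dom g).\<close>

record ('o, 'm) cat =
  cdom :: "'m \<Rightarrow> 'o"
  ccod :: "'m \<Rightarrow> 'o"
  cide :: "'o \<Rightarrow> 'm"
  ccmp :: "'m \<Rightarrow> 'm \<Rightarrow> 'm"

definition category :: "('o, 'm, 'z) cat_scheme \<Rightarrow> bool" where
  "category C \<longleftrightarrow>
     (\<forall>a. cdom C (cide C a) = a \<and> ccod C (cide C a) = a) \<and>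
     (\<forall>f g. ccod C f = cdom C g \<longrightarrow>
        cdom C (ccmp C g f) = cdom C f \<and> ccod C (ccmp C g f) = ccod C g) \<and>
     (\<forall>f. ccmp C (cide C (ccod C f)) f = f \<and> ccmp C f (cide C (cdom C f)) = f) \<and>
     (\<forall>f g h. ccod C f = cdom C g \<and> ccod C g = cdom C h \<longrightarrow>
        ccmp C h (ccmp C g f) = ccmp C (ccmp C h g) f)"

definition iso :: "('o, 'm, 'z) cat_scheme \<Rightarrow> 'm \<Rightarrow> bool" where
  "iso C f \<longleftrightarrow> (\<exists>g. cdom C g = ccod C f \<and> ccod C g = cdom C f \<and>
       ccmp C g f = cide C (cdom C f) \<and> ccmp C f g = cide C (ccod C f))"

definition groupoid :: "('o, 'm, 'z) cat_scheme \<Rightarrow> bool" where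
  "groupoid C \<longleftrightarrow> category C \<and> (\<forall>f. iso C f)"

definition endofunctor :: "('o, 'm, 'z) cat_scheme \<Rightarrow> ('o \<Rightarrow> 'o) \<Rightarrow> ('m \<Rightarrow> 'm) \<Rightarrow> bool" where
  "endofunctor C Fo Fm \<longleftrightarrow>
     (\<forall>f. cdom C (Fm f) = Fo (cdom C f) \<and> ccod C (Fm f) = Fo (ccod C f)) \<and>
     (\<forall>a. Fm (cide C a) = cide C (Fo a)) \<and>
     (\<forall>f g. ccod C f = cdom C g \<longrightarrow> Fm (ccmp C g f) = ccmp C (Fm g) (Fm f))"

record ('o, 'm) moncat = "('o, 'm) cat" +
  ctobj :: "'o \<Rightarrow> 'o \<Rightarrow> 'o"
  ctmor :: "'m \<Rightarrow> 'm \<Rightarrow> 'm"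
  cunit :: "'o"
  cassoc :: "'o \<Rightarrow> 'o \<Rightarrow> 'o \<Rightarrow> 'm"
  clunit :: "'o \<Rightarrow> 'm"
  crunit :: "'o \<Rightarrow> 'm"

definition monoidal :: "('o, 'm, 'z) moncat_scheme \<Rightarrow> bool" where
  "monoidal M \<longleftrightarrow>
     (let D = cdom M; Cd = ccod M; ii = cide M; c = ccmp M; T = ctobj M; t = ctmor M;
          I = cunit M; as = cassoc M; lu = clunit M; ru = crunit M in
     category M \<and>
     (\<forall>f g. D (t f g) = T (D f) (D g) \<and> Cd (t f g) = T (Cd f) (Cd g)) \<and>
     (\<forall>a b. t (ii a) (ii b) = ii (T a b)) \<and>
     (\<forall>f g f' g'. Cd f = D g \<and> Cd f' = D g' \<longrightarrow>
        t (c g f) (c g' f') = c (t g g') (t f f')) \<and>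
     (\<forall>a b d. D (as a b d) = T (T a b) d \<and> Cd (as a b d) = T a (T b d) \<and> iso M (as a b d)) \<and>
     (\<forall>f g h. c (as (Cd f) (Cd g) (Cd h)) (t (t f g) h) =
              c (t f (t g h)) (as (D f) (D g) (D h))) \<and>
     (\<forall>a. D (lu a) = T I a \<and> Cd (lu a) = a \<and> iso M (lu a)) \<and>
     (\<forall>a. D (ru a) = T a I \<and> Cd (ru a) = a \<and> iso M (ru a)) \<and>
     (\<forall>f. c (lu (Cd f)) (t (ii I) f) = c f (lu (D f))) \<and>
     (\<forall>f. c (ru (Cd f)) (t f (ii I)) = c f (ru (D f))) \<and>
     (\<forall>a b d e. c (t (ii a) (as b d e)) (c (as a (T b d) e) (t (as a b d) (ii e)))
               = c (as a b (T d e)) (as (T a b) d e)) \<and>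
     (\<forall>a b. c (t (ii a) (lu b)) (as a I b) = t (ru a) (ii b)))"

definition admits_functorial_inverses :: "('o, 'm, 'z) moncat_scheme \<Rightarrow> bool" where
  "admits_functorial_inverses M \<longleftrightarrow>
     (\<exists>io im \<epsilon>. endofunctor M io im \<and>
        (\<forall>a. cdom M (\<epsilon> a) = ctobj M a (io a) \<and> ccod M (\<epsilon> a) = cunit M \<and> iso M (\<epsilon> a)) \<and>
        (\<forall>f. ccmp M (\<epsilon> (ccod M f)) (ctmor M f (im f)) =
             ccmp M (cide M (cunit M)) (\<epsilon> (cdom M f))))"

end

theory Submission
  imports Defs
begin

locale mc =
  fixes M :: "('o, 'm, 'z) moncat_scheme"
  assumes mon: "monoidal M"
begin

abbreviation D where "D \<equiv> cdom M"
abbreviation Cd where "Cd \<equiv> ccod M"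
abbreviation ii where "ii \<equiv> cide M"
abbreviation cp (infixr "\<cdot>" 55) where "g \<cdot> f \<equiv> ccmp M g f"
abbreviation T where "T \<equiv> ctobj M"
abbreviation tm (infixr "\<star>" 60) where "f \<star> g \<equiv> ctmor M f g"
abbreviation U where "U \<equiv> cunit M"
abbreviation as where "as \<equiv> cassoc M"
abbreviation ru where "ru \<equiv> crunit M"

lemma cat: "category M" using mon unfolding monoidal_def Let_def by blast

lemma dom_id[simp]: "D (ii a) = a" and cod_id[simp]: "Cd (ii a) = a"
  using cat unfolding category_def by auto

lemma dom_comp[simp]: "Cd f = D g \<Longrightarrow> D (g \<cdot> f) = D f"
  and cod_comp[simp]: "Cd f = D g \<Longrightarrow> Cd (g \<cdot> f) = Cd g"
  using cat unfolding category_def by auto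

lemma idl[simp]: "Cd f = a \<Longrightarrow> ii a \<cdot> f = f"
  and idr[simp]: "D f = a \<Longrightarrow> f \<cdot> ii a = f"
  using cat unfolding category_def by auto

lemma assoc[simp]: "Cd f = D g \<Longrightarrow> Cd g = D h \<Longrightarrow> (h \<cdot> g) \<cdot> f = h \<cdot> (g \<cdot> f)"
  using cat unfolding category_def by metis

lemma cancel: "h \<cdot> g = k \<Longrightarrow> Cd f = D g \<Longrightarrow> Cd g = D h \<Longrightarrow> h \<cdot> (g \<cdot> f) = k \<cdot> f"
  using assoc by metis

lemma dom_t[simp]: "D (f \<star> g) = T (D f) (D g)" and cod_t[simp]: "Cd (f \<star> g) = T (Cd f) (Cd g)"
  using mon unfolding monoidal_def Let_def by auto

lemma tid[simp]: "ii a \<star> ii b = ii (T a b)"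
  using mon unfolding monoidal_def Let_def by auto

lemma interchange: "Cd f = D g \<Longrightarrow> Cd f' = D g' \<Longrightarrow> (g \<cdot> f) \<star> (g' \<cdot> f') = (g \<star> g') \<cdot> (f \<star> f')"
  using mon unfolding monoidal_def Let_def by auto

lemma as_dom[simp]: "D (as a b d) = T (T a b) d" and as_cod[simp]: "Cd (as a b d) = T a (T b d)"
  and as_iso: "iso M (as a b d)"
  using mon unfolding monoidal_def Let_def by auto

lemma nat_as: "as (Cd f) (Cd g) (Cd h) \<cdot> ((f \<star> g) \<star> h) = (f \<star> (g \<star> h)) \<cdot> as (D f) (D g) (D h)"
  using mon unfolding monoidal_def Let_def by auto

lemma ru_dom[simp]: "D (ru a) = T a U" and ru_cod[simp]: "Cd (ru a) = a"
  and ru_iso: "iso M (ru a)"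
  using mon unfolding monoidal_def Let_def by auto

lemma nat_ru: "ru (Cd f) \<cdot> (f \<star> ii U) = f \<cdot> ru (D f)"
  using mon unfolding monoidal_def Let_def by auto

lemma isoE: assumes "iso M f"
  obtains g where "D g = Cd f" "Cd g = D f" "g \<cdot> f = ii (D f)" "f \<cdot> g = ii (Cd f)"
  using assms unfolding iso_def by blast

lemma isoI: "D g = Cd f \<Longrightarrow> Cd g = D f \<Longrightarrow> g \<cdot> f = ii (D f) \<Longrightarrow> f \<cdot> g = ii (Cd f) \<Longrightarrow> iso M f"
  unfolding iso_def by blast

lemma iso_comp: assumes "iso M f" "iso M g" "Cd f = D g" shows "iso M (g \<cdot> f)"
proof -
  obtain f' where f': "D f' = Cd f" "Cd f' = D f" "f' \<cdot> f = ii (D f)" "f \<cdot> f' = ii (Cd f)"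
    using assms(1) by (rule isoE)
  obtain g' where g': "D g' = Cd g" "Cd g' = D g" "g' \<cdot> g = ii (D g)" "g \<cdot> g' = ii (Cd g)"
    using assms(2) by (rule isoE)
  have 1: "(f' \<cdot> g') \<cdot> (g \<cdot> f) = ii (D f)"
  proof -
    have "g' \<cdot> (g \<cdot> f) = ii (D g) \<cdot> f" using f' g' assms(3) by (intro cancel) auto
    then show ?thesis using f' g' assms(3) by simp
  qed
  have 2: "(g \<cdot> f) \<cdot> (f' \<cdot> g') = ii (Cd g)"
  proof -
    have "f \<cdot> (f' \<cdot> g') = ii (D g) \<cdot> g'" using f' g' assms(3) by (intro cancel) auto
    then show ?thesis using f' g' assms(3) by simp
  qed
  show ?thesis by (rule isoI[of "f' \<cdot> g'"]) (use f' g' assms(3) 1 2 in simp_all)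
qed

lemma iso_tid: assumes "iso M e" shows "iso M (ii a \<star> e)"
proof -
  obtain g where g: "D g = Cd e" "Cd g = D e" "g \<cdot> e = ii (D e)" "e \<cdot> g = ii (Cd e)"
    using assms by (rule isoE)
  have 1: "(ii a \<star> g) \<cdot> (ii a \<star> e) = ii (T a (D e))"
    using interchange[of "ii a" "ii a" e g] g by simp
  have 2: "(ii a \<star> e) \<cdot> (ii a \<star> g) = ii (T a (Cd e))"
    using interchange[of "ii a" "ii a" g e] g by simp
  show ?thesis by (rule isoI[of "ii a \<star> g"]) (use g 1 2 in simp_all)
qed

definition eta where "eta e c d x = ru x \<cdot> ((ii x \<star> e) \<cdot> as x c d)"

context
  fixes e c d
  assumes e_iso: "iso M e" and e_dom: "D e = T c d" and e_cod: "Cd e = U"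
begin

lemma eta_dom[simp]: "D (eta e c d x) = T (T x c) d" and eta_cod[simp]: "Cd (eta e c d x) = x"
  unfolding eta_def using e_dom e_cod by simp_all

lemma eta_iso: "iso M (eta e c d x)"
  unfolding eta_def using e_dom e_cod
  by (intro iso_comp iso_tid e_iso as_iso ru_iso) simp_all

lemma eta_nat: "eta e c d (Cd f) \<cdot> ((f \<star> ii c) \<star> ii d) = f \<cdot> eta e c d (D f)"
proof -
  let ?x = "D f" and ?y = "Cd f"
  have A: "as ?y c d \<cdot> ((f \<star> ii c) \<star> ii d) = (f \<star> ii (T c d)) \<cdot> as ?x c d"
    using nat_as[of f "ii c" "ii d"] by simp
  have B: "(ii ?y \<star> e) \<cdot> (f \<star> ii (T c d)) = (f \<star> ii U) \<cdot> (ii ?x \<star> e)"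
    using interchange[of f "ii ?y" "ii (T c d)" e] interchange[of "ii ?x" f e "ii U"] e_dom e_cod
    by simp
  have "eta e c d ?y \<cdot> ((f \<star> ii c) \<star> ii d) = ru ?y \<cdot> ((ii ?y \<star> e) \<cdot> (as ?y c d \<cdot> ((f \<star> ii c) \<star> ii d)))"
    unfolding eta_def using e_dom e_cod by simp
  also have "\<dots> = ru ?y \<cdot> ((ii ?y \<star> e) \<cdot> ((f \<star> ii (T c d)) \<cdot> as ?x c d))" by (simp only: A)
  also have "\<dots> = ru ?y \<cdot> ((f \<star> ii U) \<cdot> ((ii ?x \<star> e) \<cdot> as ?x c d))"
    using cancel[OF B, of "as ?x c d"] e_dom e_cod by simp
  also have "\<dots> = f \<cdot> (ru ?x \<cdot> ((ii ?x \<star> e) \<cdot> as ?x c d))"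
    using cancel[OF nat_ru[of f], of "(ii ?x \<star> e) \<cdot> as ?x c d"] e_dom e_cod by simp
  finally show ?thesis unfolding eta_def .
qed

lemma eta_nat': "Cd X = D ((f \<star> ii c) \<star> ii d) \<Longrightarrow>
   eta e c d (Cd f) \<cdot> (((f \<star> ii c) \<star> ii d) \<cdot> X) = f \<cdot> (eta e c d (D f) \<cdot> X)"
  using cancel[OF eta_nat[of f], of X] by (simp add: assoc)

lemma right_inv:
  assumes fs: "(f \<star> ii c) \<cdot> s = ii (T (Cd f) c)" and sd: "D s = T (Cd f) c" and sc: "Cd s = T (D f) c"
  shows "\<exists>r. D r = Cd f \<and> Cd r = D f \<and> f \<cdot> r = ii (Cd f)"
proof -
  let ?x = "D f" and ?y = "Cd f"
  let ?F = "(f \<star> ii c) \<star> ii d" and ?S = "s \<star> ii d"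
  have FS: "?F \<cdot> ?S = ii (T (T ?y c) d)"
    using interchange[of s "f \<star> ii c" "ii d" "ii d"] fs sd sc by simp
  obtain k where k: "D k = ?y" "Cd k = T (T ?y c) d" "eta e c d ?y \<cdot> k = ii ?y"
    using eta_iso[of ?y] by (rule isoE) auto
  have "f \<cdot> (eta e c d ?x \<cdot> (?S \<cdot> k)) = eta e c d ?y \<cdot> (?F \<cdot> (?S \<cdot> k))"
    using eta_nat'[of "?S \<cdot> k" f] sd sc k by simp
  also have "\<dots> = eta e c d ?y \<cdot> k"
    using cancel[OF FS, of k] sd sc k by simp
  finally have "f \<cdot> (eta e c d ?x \<cdot> (?S \<cdot> k)) = ii ?y" using k by simp
  then show ?thesis using sd sc k
    by (intro exI[of _ "eta e c d ?x \<cdot> (?S \<cdot> k)"]) simp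
qed

lemma left_inv:
  assumes tf: "t \<cdot> (f \<star> ii c) = ii (T (D f) c)" and td: "D t = T (Cd f) c" and tc: "Cd t = T (D f) c"
  shows "\<exists>l. D l = Cd f \<and> Cd l = D f \<and> l \<cdot> f = ii (D f)"
proof -
  let ?x = "D f" and ?y = "Cd f"
  let ?F = "(f \<star> ii c) \<star> ii d" and ?S = "t \<star> ii d"
  have SF: "?S \<cdot> ?F = ii (T (T ?x c) d)"
    using interchange[of "f \<star> ii c" t "ii d" "ii d"] tf td tc by simp
  obtain ky where ky: "D ky = ?y" "Cd ky = T (T ?y c) d" "ky \<cdot> eta e c d ?y = ii (T (T ?y c) d)"
    using eta_iso[of ?y] by (rule isoE) auto
  obtain kx where kx: "D kx = ?x" "Cd kx = T (T ?x c) d" "eta e c d ?x \<cdot> kx = ii ?x"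
    using eta_iso[of ?x] by (rule isoE) auto
  have "ky \<cdot> f = ky \<cdot> (f \<cdot> (eta e c d ?x \<cdot> kx))" using kx by simp
  also have "\<dots> = ky \<cdot> (eta e c d ?y \<cdot> (?F \<cdot> kx))"
    using eta_nat'[of kx f] kx by simp
  also have "\<dots> = ?F \<cdot> kx"
    using cancel[OF ky(3), of "?F \<cdot> kx"] kx ky by simp
  finally have kf: "ky \<cdot> f = ?F \<cdot> kx" .
  have "(eta e c d ?x \<cdot> (?S \<cdot> ky)) \<cdot> f = eta e c d ?x \<cdot> (?S \<cdot> (ky \<cdot> f))"
    using ky td tc by simp
  also have "\<dots> = eta e c d ?x \<cdot> (?S \<cdot> (?F \<cdot> kx))" by (simp only: kf)
  also have "\<dots> = eta e c d ?x \<cdot> kx"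
    using cancel[OF SF, of kx] kx td tc by simp
  finally have "(eta e c d ?x \<cdot> (?S \<cdot> ky)) \<cdot> f = ii ?x" using kx by simp
  then show ?thesis using td tc ky
    by (intro exI[of _ "eta e c d ?x \<cdot> (?S \<cdot> ky)"]) simp
qed

end

end

theorem lemma3p13:
  fixes M :: "('o, 'm, 'z) moncat_scheme"
  assumes "monoidal M" and "admits_functorial_inverses M"
  shows "groupoid M"
proof -
  interpret mc M by (rule mc.intro) (rule assms(1))
  obtain io im \<epsilon> where fnc: "endofunctor M io im"
    and eps: "\<And>a. cdom M (\<epsilon> a) = ctobj M a (io a) \<and> ccod M (\<epsilon> a) = cunit M \<and> iso M (\<epsilon> a)"
    and nat: "\<And>f. ccmp M (\<epsilon> (ccod M f)) (ctmor M f (im f)) = ccmp M (cide M (cunit M)) (\<epsilon> (cdom M f))"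
    using assms(2) unfolding admits_functorial_inverses_def by blast
  have imd[simp]: "D (im f) = io (D f)" and imc[simp]: "Cd (im f) = io (Cd f)" for f
    using fnc unfolding endofunctor_def by auto
  have ed[simp]: "D (\<epsilon> a) = T a (io a)" and ec[simp]: "Cd (\<epsilon> a) = U" and ei: "iso M (\<epsilon> a)" for a
    using eps by auto
  have "iso M f" for f
  proof -
    let ?a = "D f" and ?b = "Cd f"
    let ?h = "f \<star> im f"
    have n: "\<epsilon> ?b \<cdot> ?h = \<epsilon> ?a" using nat[of f] by simp
    obtain k where k: "D k = U" "Cd k = T ?b (io ?b)" "k \<cdot> \<epsilon> ?b = ii (T ?b (io ?b))" "\<epsilon> ?b \<cdot> k = ii U"
      using ei[of ?b] by (rule isoE) auto
    have ki: "iso M k" using k by (intro isoI[of "\<epsilon> ?b"]) auto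
    have "k \<cdot> \<epsilon> ?a = k \<cdot> (\<epsilon> ?b \<cdot> ?h)" using n by simp
    also have "\<dots> = ?h" using cancel[OF k(3), of ?h] k by simp
    finally have "iso M ?h" using iso_comp[OF ei[of ?a] ki] k by simp
    then obtain h' where h': "D h' = T ?b (io ?b)" "Cd h' = T ?a (io ?a)"
      "h' \<cdot> ?h = ii (T ?a (io ?a))" "?h \<cdot> h' = ii (T ?b (io ?b))"
      by (rule isoE) auto
    have h1: "?h = (f \<star> ii (io ?b)) \<cdot> (ii ?a \<star> im f)"
      using interchange[of "ii ?a" f "im f" "ii (io ?b)"] by simp
    have h2: "?h = (ii ?b \<star> im f) \<cdot> (f \<star> ii (io ?a))"
      using interchange[of f "ii ?b" "ii (io ?a)" "im f"] by simp
    have "(f \<star> ii (io ?b)) \<cdot> ((ii ?a \<star> im f) \<cdot> h') = ((f \<star> ii (io ?b)) \<cdot> (ii ?a \<star> im f)) \<cdot> h'"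
      by (rule assoc[symmetric]) (simp_all add: h')
    also have "\<dots> = ii (T ?b (io ?b))" using h'(4) h1 by simp
    finally obtain r where r: "D r = ?b" "Cd r = ?a" "f \<cdot> r = ii ?b"
      using right_inv[OF ei[of "io ?b"] ed ec, of f "(ii ?a \<star> im f) \<cdot> h'"] h' by auto
    have "(h' \<cdot> (ii ?b \<star> im f)) \<cdot> (f \<star> ii (io ?a)) = h' \<cdot> ((ii ?b \<star> im f) \<cdot> (f \<star> ii (io ?a)))"
      by (rule assoc) (simp_all add: h')
    also have "\<dots> = ii (T ?a (io ?a))" using h'(3) h2 by simp
    finally obtain l where l: "D l = ?b" "Cd l = ?a" "l \<cdot> f = ii ?a"
      using left_inv[OF ei[of "io ?a"] ed ec, of "h' \<cdot> (ii ?b \<star> im f)" f] h' by auto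
    have "l = l \<cdot> (f \<cdot> r)" using r l by simp
    also have "\<dots> = r" using cancel[OF l(3), of r] r l by simp
    finally have "l = r" .
    then show ?thesis using l r by (intro isoI[of r]) auto
  qed
  then show ?thesis unfolding groupoid_def using cat by blast
qed

end
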